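(* Fix an edge $ij\in\mathcal E$, dual variables $(\lambda,\xi)$, and let $\Gamma=\Gamma(\lambda,\xi)$. Then: (a) If $\xi'=\xi$ and $\lambda'$ agrees with $\lambda$ except $\lambda'_{ij}(x)=\lambda_{ij}(x)+\frac12\log\frac{\sum_{x'}\Gamma_{ij}(x,x')}{\Gamma_i(x)}$ for all $x\in\chi$ (so that $\Gamma(\lambda',\xi')$ is the projection of $\Gamma$ onto $\{\Gamma_{ij}\mathbb 1=\Gamma_i\}$), then $L(\lambda',\xi')-L(\lambda,\xi)=2h^2(\Gamma_{ij}\mathbb 1,\Gamma_i)$. (b) If $\lambda'=\lambda$ and $\xi'$ agrees with $\xi$ except $\xi'_{ij}=\xi_{ij}+\log\sum_{x_i,x_j}\Gamma_{ij}(x_i,x_j)$ and $\xi'_i=\xi_i+\log\sum_x\Gamma_i(x)$ (so that $\Gamma(\lambda',\xi')$ is obtained by normalizing $\Gamma_{ij}$ and $\Gamma_i$), then $L(\lambda',\xi')-L(\lambda,\xi)\ge0$. (c) If $\xi'=\xi$ and $\lambda'$ agrees with $\lambda$ except $\lambda'_{ji}(x)=\lambda_{ji}(x)+\frac12\log\frac{\sum_{x'}\Gamma_{ij}(x',x)}{\Gamma_j(x)}$ for all $x\in\chi$ (so that $\Gamma(\lambda',\xi')$ is the projection onto $\{\Gamma_{ij}^\top\mathbb 1=\Gamma_j\}$), then $L(\lambda',\xi')-L(\lambda,\xi)=2h^2(\Gamma_{ij}^\top\mathbb 1,\Gamma_j)$. (d) If $\lambda'=\lambda$ and $\xi'$ agrees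 with $\xi$ except $\xi'_{ij}=\xi_{ij}+\log\sum_{x_i,x_j}\Gamma_{ij}(x_i,x_j)$ and $\xi'_j=\xi_j+\log\sum_x\Gamma_j(x)$, then $L(\lambda',\xi')-L(\lambda,\xi)\ge0$.
   Context: Let $G=(\mathcal V,\mathcal E)$ be a graph with $\mathcal V=\{1,\dots,n\}$, edges written as ordered pairs $ij$, $N(i)$ the set of neighbours of $i$, $\chi=\{0,\dots,d-1\}$, $\eta>0$, and $C$ a cost vector with components $C_i\in\mathbb R^d$ ($i\in\mathcal V$), $C_{ij}\in\mathbb R^{d\times d}$ ($ij\in\mathcal E$). Dual variables $(\lambda,\xi)$ consist of, for each edge $ij\in\mathcal E$, vectors $\lambda_{ij}\in\mathbb R^d$ (associated with vertex $i$) and $\lambda_{ji}\in\mathbb R^d$ (associated with vertex $j$) and a scalar $\xi_{ij}$, and for each vertex a scalar $\xi_i$. The associated marginal vector $\Gamma(\lambda,\xi)$ is $\Gamma_{ij}(x_i,x_j)=\exp(-\eta C_{ij}(x_i,x_j)-\lambda_{ij}(x_i)-\lambda_{ji}(x_j)-\xi_{ij})$ and $\Gamma_i(x)=\exp(-\eta C_i(x)-\xi_i+\sum_{j\in N(i)}\lambda_{ij}(x))$. The Lyapunov function is $L(\lambda,\xi)=-\sum_{ij\in\mathcal E}\sum_{x_i,x_j}\Gamma_{ij}(x_i,x_j)-\sum_{i\in\mathcal V}\sum_x\Gamma_i(x)-\sum_{ij\in\mathcal E}\xi_{ij}-\sum_{i\in\mathcal V}\xi_i+\sum_{ij\in\mathcal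 E}\sum_{x_i,x_j}e^{-\eta C_{ij}(x_i,x_j)}+\sum_{i}\sum_{x}e^{-\eta C_i(x)}$, with $\Gamma=\Gamma(\lambda,\xi)$. For nonnegative vectors $p,q$, $h(p,q)=\frac1{\sqrt2}\|\sqrt p-\sqrt q\|_2$ (entrywise square roots). *)

theory Defs
  imports Complex_Main
begin

text \<open>Vertices are 1..n, labels chi = {0..<d}.
  Dual variables: lam i j x is lambda_{ij}(x) (the vector of edge {i,j} associated with
  vertex i); xiE e is xi_e for an edge e; xiV i is xi_i.\<close>

definition nbrs :: "(nat \<times> nat) set \<Rightarrow> nat \<Rightarrow> nat set" where
  "nbrs E i = {j. (i, j) \<in> E \<or> (j, i) \<in> E}"

definition GammaE :: "real \<Rightarrow> (nat \<times> nat \<Rightarrow> nat \<Rightarrow> nat \<Rightarrow> real)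
    \<Rightarrow> (nat \<Rightarrow> nat \<Rightarrow> nat \<Rightarrow> real) \<Rightarrow> (nat \<times> nat \<Rightarrow> real)
    \<Rightarrow> nat \<times> nat \<Rightarrow> nat \<Rightarrow> nat \<Rightarrow> real" where
  "GammaE eta CE lam xiE e x y =
     exp (- eta * CE e x y - lam (fst e) (snd e) x - lam (snd e) (fst e) y - xiE e)"

definition GammaV :: "(nat \<times> nat) set \<Rightarrow> real \<Rightarrow> (nat \<Rightarrow> nat \<Rightarrow> real)
    \<Rightarrow> (nat \<Rightarrow> nat \<Rightarrow> nat \<Rightarrow> real) \<Rightarrow> (nat \<Rightarrow> real) \<Rightarrow> nat \<Rightarrow> nat \<Rightarrow> real" where
  "GammaV E eta CV lam xiV i x =
     exp (- eta * CV i x - xiV i + (\<Sum>j\<in>nbrs E i. lam i j x))"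

definition Lyap :: "nat \<Rightarrow> nat \<Rightarrow> (nat \<times> nat) set \<Rightarrow> real
    \<Rightarrow> (nat \<Rightarrow> nat \<Rightarrow> real) \<Rightarrow> (nat \<times> nat \<Rightarrow> nat \<Rightarrow> nat \<Rightarrow> real)
    \<Rightarrow> (nat \<Rightarrow> nat \<Rightarrow> nat \<Rightarrow> real) \<Rightarrow> (nat \<times> nat \<Rightarrow> real) \<Rightarrow> (nat \<Rightarrow> real) \<Rightarrow> real" where
  "Lyap n d E eta CV CE lam xiE xiV =
     - (\<Sum>e\<in>E. \<Sum>x<d. \<Sum>y<d. GammaE eta CE lam xiE e x y)
     - (\<Sum>i\<in>{1..n}. \<Sum>x<d. GammaV E eta CV lam xiV i x)
     - (\<Sum>e\<in>E. xiE e) - (\<Sum>i\<in>{1..n}. xiV i)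
     + (\<Sum>e\<in>E. \<Sum>x<d. \<Sum>y<d. exp (- eta * CE e x y))
     + (\<Sum>i\<in>{1..n}. \<Sum>x<d. exp (- eta * CV i x))"

definition hellinger :: "nat \<Rightarrow> (nat \<Rightarrow> real) \<Rightarrow> (nat \<Rightarrow> real) \<Rightarrow> real" where
  "hellinger d p q = (1 / sqrt 2) * sqrt (\<Sum>x<d. (sqrt (p x) - sqrt (q x))^2)"

end

theory Submission
  imports Defs
begin

lemma sum_diff_one:
  assumes "finite A" "a \<in> A" "\<And>x. x \<in> A \<Longrightarrow> x \<noteq> a \<Longrightarrow> f x = g x"
  shows "sum f A - sum g A = f a - (g a :: real)"
proof -
  have "sum f A = f a + sum f (A - {a})" using assms by (simp add: sum.remove)
  moreover have "sum g A = g a + sum g (A - {a})" using assms by (simp add: sum.remove)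
  moreover have "sum f (A - {a}) = sum g (A - {a})" using assms by (intro sum.cong) auto
  ultimately show ?thesis by simp
qed

lemma arith4:
  fixes A A' B B' C C' D D' a a' b b' c c' dd dd' X Y :: real
  shows "A' - A = a' - a \<Longrightarrow> B' - B = b' - b \<Longrightarrow> C' - C = c' - c \<Longrightarrow> D' - D = dd' - dd \<Longrightarrow>
    (- A' - B' - C' - D' + X + Y) - (- A - B - C - D + X + Y) = - a' + a - b' + b - c' + c - dd' + dd"
  by linarith

lemma Lyap_diff:
  assumes "finite E" "e0 \<in> E" "v0 \<in> {1..n}"
   "\<And>e x y. e\<in>E \<Longrightarrow> e\<noteq>e0 \<Longrightarrow> GammaE eta CE lam' xiE' e x y = GammaE eta CE lam xiE e x y"
   "\<And>e. e\<in>E \<Longrightarrow> e\<noteq>e0 \<Longrightarrow> xiE' e = xiE e"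
   "\<And>v x. v\<in>{1..n} \<Longrightarrow> v\<noteq>v0 \<Longrightarrow> GammaV E eta CV lam' xiV' v x = GammaV E eta CV lam xiV v x"
   "\<And>v. v \<in>{1..n} \<Longrightarrow> v\<noteq>v0 \<Longrightarrow> xiV' v = xiV v"
  shows "Lyap n d E eta CV CE lam' xiE' xiV' - Lyap n d E eta CV CE lam xiE xiV =
     - (\<Sum>x<d. \<Sum>y<d. GammaE eta CE lam' xiE' e0 x y) + (\<Sum>x<d. \<Sum>y<d. GammaE eta CE lam xiE e0 x y)
     - (\<Sum>x<d. GammaV E eta CV lam' xiV' v0 x) + (\<Sum>x<d. GammaV E eta CV lam xiV v0 x)
     - xiE' e0 + xiE e0 - xiV' v0 + xiV v0"
proof -
  have 1: "(\<Sum>e\<in>E. \<Sum>x<d. \<Sum>y<d. GammaE eta CE lam' xiE' e x y) - (\<Sum>e\<in>E. \<Sum>x<d. \<Sum>y<d. GammaE eta CE lam xiE e x y)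
    = (\<Sum>x<d. \<Sum>y<d. GammaE eta CE lam' xiE' e0 x y) - (\<Sum>x<d. \<Sum>y<d. GammaE eta CE lam xiE e0 x y)"
    by (rule sum_diff_one) (use assms in auto)
  have 2: "(\<Sum>i\<in>{1..n}. \<Sum>x<d. GammaV E eta CV lam' xiV' i x) - (\<Sum>i\<in>{1..n}. \<Sum>x<d. GammaV E eta CV lam xiV i x)
    = (\<Sum>x<d. GammaV E eta CV lam' xiV' v0 x) - (\<Sum>x<d. GammaV E eta CV lam xiV v0 x)"
    by (rule sum_diff_one) (use assms in auto)
  have 3: "(\<Sum>e\<in>E. xiE' e) - (\<Sum>e\<in>E. xiE e) = xiE' e0 - xiE e0"
    by (rule sum_diff_one) (use assms in auto)
  have 4: "(\<Sum>i\<in>{1..n}. xiV' i) - (\<Sum>i\<in>{1..n}. xiV i) = xiV' v0 - xiV v0"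
    by (rule sum_diff_one) (use assms in auto)
  show ?thesis unfolding Lyap_def by (rule arith4[OF 1 2 3 4])
qed

lemma GE_pos: "GammaE eta CE lam xiE e x y > 0" by (simp add: GammaE_def)
lemma GV_pos: "GammaV E eta CV lam xiV i x > 0" by (simp add: GammaV_def)

lemma sumpos: "0 < (d::nat) \<Longrightarrow> (\<And>x. f x > (0::real)) \<Longrightarrow> (\<Sum>x<d. f x) > 0"
  by (intro sum_pos) auto

lemma hell2: "2 * (hellinger d p q)^2 = (\<Sum>x<d. (sqrt (p x) - sqrt (q x))^2)"
  unfolding hellinger_def by (simp add: power_divide sum_nonneg)

lemma exp_half_ln: "t > 0 \<Longrightarrow> exp (1/2 * ln t) = sqrt t"
proof -
  assume t: "t > 0"
  have "exp (1/2 * ln t) = t powr (1/2)" using t by (simp add: powr_def mult.commute)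
  also have "\<dots> = sqrt t" using t by (simp add: powr_half_sqrt)
  finally show ?thesis .
qed

lemma ln_ineq: "A > 0 \<Longrightarrow> A - 1 - ln (A::real) \<ge> 0"
  using ln_le_minus_one by (simp add: algebra_simps)



lemma sqrt_aux1: "a > 0 \<Longrightarrow> b > 0 \<Longrightarrow> a / sqrt (a / b) = sqrt a * sqrt (b::real)"
  by (simp add: real_sqrt_divide field_simps)

lemma sqrt_aux2: "a > 0 \<Longrightarrow> b > 0 \<Longrightarrow> b * sqrt (a / b) = sqrt a * sqrt (b::real)"
  by (simp add: real_sqrt_divide field_simps)

lemma sq_expand: "a \<ge> 0 \<Longrightarrow> b \<ge> 0 \<Longrightarrow> (sqrt a - sqrt b)^2 = a + b - 2 * (sqrt a * sqrt (b::real))"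
  by (simp add: power2_diff)

lemma basic_facts:
  assumes E_sub: "E \<subseteq> {1..n} \<times> {1..n}"
    and E_simple: "\<forall>(a, b)\<in>E. a \<noteq> b \<and> (b, a) \<notin> E"
    and ij_edge: "(i, j) \<in> E"
  shows "finite E" "i \<noteq> j" "(j, i) \<notin> E" "i \<in> {1..n}" "j \<in> {1..n}"
    "j \<in> nbrs E i" "i \<in> nbrs E j" "finite (nbrs E i)" "finite (nbrs E j)"
proof -
  show fE: "finite E" using E_sub finite_subset by blast
  show "i \<noteq> j" "(j, i) \<notin> E" using E_simple ij_edge by auto
  show "i \<in> {1..n}" "j \<in> {1..n}" using E_sub ij_edge by auto
  show "j \<in> nbrs E i" "i \<in> nbrs E j" using ij_edge by (auto simp: nbrs_def)
  have "nbrs E k \<subseteq> fst ` E \<union> snd ` E" for k by (force simp: nbrs_def)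
  then show "finite (nbrs E i)" "finite (nbrs E j)" using fE by (meson finite_Un finite_imageI finite_subset)+
qed

lemma part_a:
  assumes d_pos: "0 < d"
    and E_sub: "E \<subseteq> {1..n} \<times> {1..n}"
    and E_simple: "\<forall>(a, b)\<in>E. a \<noteq> b \<and> (b, a) \<notin> E"
    and ij_edge: "(i, j) \<in> E"
    and lam'_def: "lam' = lam(i := (lam i)(j := (\<lambda>x. lam i j x + 1/2 * ln
            ((\<Sum>x'<d. GammaE eta CE lam xiE (i, j) x x') / GammaV E eta CV lam xiV i x))))"
  shows "Lyap n d E eta CV CE lam' xiE xiV - Lyap n d E eta CV CE lam xiE xiV
        = 2 * (hellinger d (\<lambda>x. \<Sum>x'<d. GammaE eta CE lam xiE (i, j) x x')
                           (GammaV E eta CV lam xiV i))^2"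
proof -
  note bf = basic_facts[OF E_sub E_simple ij_edge]
  define a where "a x = (\<Sum>x'<d. GammaE eta CE lam xiE (i, j) x x')" for x
  define b where "b = GammaV E eta CV lam xiV i"
  define dl where "dl x = 1/2 * ln (a x / b x)" for x
  have apos: "a x > 0" for x unfolding a_def by (rule sumpos[OF d_pos GE_pos])
  have bpos: "b x > 0" for x unfolding b_def by (rule GV_pos)
  have expdl: "exp (dl x) = sqrt (a x / b x)" for x
    unfolding dl_def using apos[of x] bpos[of x] exp_half_ln[of "a x / b x"] by simp
  have lij: "lam' i j = (\<lambda>x. lam i j x + dl x)" unfolding lam'_def dl_def a_def b_def by simp
  have lother: "lam' u v = lam u v" if "(u, v) \<noteq> (i, j)" for u v
    using that unfolding lam'_def by auto
  have GEo: "GammaE eta CE lam' xiE e x y = GammaE eta CE lam xiE e x y" if "e \<in> E" "e \<noteq> (i, j)" for e x y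
  proof -
    have "e \<noteq> (j, i)" using that bf by auto
    then have "lam' (fst e) (snd e) = lam (fst e) (snd e)" "lam' (snd e) (fst e) = lam (snd e) (fst e)"
      using that by (auto intro!: lother simp: prod_eq_iff)
    then show ?thesis unfolding GammaE_def by simp
  qed
  have GVo: "GammaV E eta CV lam' xiV v x = GammaV E eta CV lam xiV v x" if "v \<noteq> i" for v x
  proof -
    have "lam' v = lam v" using that unfolding lam'_def by simp
    then show ?thesis unfolding GammaV_def by simp
  qed
  have D: "Lyap n d E eta CV CE lam' xiE xiV - Lyap n d E eta CV CE lam xiE xiV =
     - (\<Sum>x<d. \<Sum>y<d. GammaE eta CE lam' xiE (i,j) x y) + (\<Sum>x<d. \<Sum>y<d. GammaE eta CE lam xiE (i,j) x y)
     - (\<Sum>x<d. GammaV E eta CV lam' xiV i x) + (\<Sum>x<d. GammaV E eta CV lam xiV i x)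
     - xiE (i,j) + xiE (i,j) - xiV i + xiV i"
    by (rule Lyap_diff) (use bf ij_edge GEo GVo in auto)
  have GEij: "GammaE eta CE lam' xiE (i,j) x y = GammaE eta CE lam xiE (i,j) x y / exp (dl x)" for x y
  proof -
    have "lam' j i = lam j i" using bf by (intro lother) auto
    then have "GammaE eta CE lam' xiE (i,j) x y
        = exp ((- eta * CE (i,j) x y - lam i j x - lam j i y - xiE (i,j)) - dl x)"
      unfolding GammaE_def by (simp add: lij algebra_simps)
    then show ?thesis unfolding GammaE_def exp_diff by simp
  qed
  have GVi: "GammaV E eta CV lam' xiV i x = b x * exp (dl x)" for x
  proof -
    have "(\<Sum>k\<in>nbrs E i. lam' i k x) - (\<Sum>k\<in>nbrs E i. lam i k x) = lam' i j x - lam i j x"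
      by (rule sum_diff_one) (use bf lother in auto)
    then have "(\<Sum>k\<in>nbrs E i. lam' i k x) = (\<Sum>k\<in>nbrs E i. lam i k x) + dl x" using lij by simp
    then have "GammaV E eta CV lam' xiV i x = exp ((- eta * CV i x - xiV i + (\<Sum>k\<in>nbrs E i. lam i k x)) + dl x)"
      unfolding GammaV_def by (simp add: algebra_simps)
    then show ?thesis unfolding GammaV_def b_def exp_add by simp
  qed
  have S1: "(\<Sum>x<d. \<Sum>y<d. GammaE eta CE lam' xiE (i,j) x y) = (\<Sum>x<d. sqrt (a x) * sqrt (b x))"
  proof (rule sum.cong[OF refl])
    fix x
    have "(\<Sum>y<d. GammaE eta CE lam' xiE (i,j) x y) = a x / exp (dl x)"
      unfolding GEij a_def by (simp add: sum_divide_distrib)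
    then show "(\<Sum>y<d. GammaE eta CE lam' xiE (i,j) x y) = sqrt (a x) * sqrt (b x)"
      using sqrt_aux1[OF apos bpos] expdl by simp
  qed
  have S2: "(\<Sum>x<d. GammaV E eta CV lam' xiV i x) = (\<Sum>x<d. sqrt (a x) * sqrt (b x))"
    using GVi expdl sqrt_aux2[OF apos bpos] by simp
  have H: "2 * (hellinger d a b)^2 = (\<Sum>x<d. a x + b x - 2 * (sqrt (a x) * sqrt (b x)))"
    unfolding hell2 using apos bpos by (intro sum.cong) (auto intro!: sq_expand less_imp_le)
  have "Lyap n d E eta CV CE lam' xiE xiV - Lyap n d E eta CV CE lam xiE xiV = 2 * (hellinger d a b)^2"
    unfolding D S1 S2 H using a_def b_def
    by (simp add: sum.distrib sum_subtractf sum_distrib_left[symmetric])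
  then show ?thesis unfolding a_def b_def by (simp add: a_def[abs_def])
qed


lemma part_c:
  assumes d_pos: "0 < d"
    and E_sub: "E \<subseteq> {1..n} \<times> {1..n}"
    and E_simple: "\<forall>(a, b)\<in>E. a \<noteq> b \<and> (b, a) \<notin> E"
    and ij_edge: "(i, j) \<in> E"
    and lam'_def: "lam' = lam(j := (lam j)(i := (\<lambda>x. lam j i x + 1/2 * ln
            ((\<Sum>x'<d. GammaE eta CE lam xiE (i, j) x' x) / GammaV E eta CV lam xiV j x))))"
  shows "Lyap n d E eta CV CE lam' xiE xiV - Lyap n d E eta CV CE lam xiE xiV
        = 2 * (hellinger d (\<lambda>x. \<Sum>x'<d. GammaE eta CE lam xiE (i, j) x' x)
                           (GammaV E eta CV lam xiV j))^2"
proof -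
  note bf = basic_facts[OF E_sub E_simple ij_edge]
  define a where "a x = (\<Sum>x'<d. GammaE eta CE lam xiE (i, j) x' x)" for x
  define b where "b = GammaV E eta CV lam xiV j"
  define dl where "dl x = 1/2 * ln (a x / b x)" for x
  have apos: "a x > 0" for x unfolding a_def by (rule sumpos[OF d_pos GE_pos])
  have bpos: "b x > 0" for x unfolding b_def by (rule GV_pos)
  have expdl: "exp (dl x) = sqrt (a x / b x)" for x
    unfolding dl_def using apos[of x] bpos[of x] exp_half_ln[of "a x / b x"] by simp
  have lji: "lam' j i = (\<lambda>x. lam j i x + dl x)" unfolding lam'_def dl_def a_def b_def by simp
  have lother: "lam' u v = lam u v" if "(u, v) \<noteq> (j, i)" for u v
    using that unfolding lam'_def by auto
  have GEo: "GammaE eta CE lam' xiE e x y = GammaE eta CE lam xiE e x y" if "e \<in> E" "e \<noteq> (i, j)" for e x y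
  proof -
    have "e \<noteq> (j, i)" using that bf by auto
    then have "lam' (fst e) (snd e) = lam (fst e) (snd e)" "lam' (snd e) (fst e) = lam (snd e) (fst e)"
      using that by (auto intro!: lother simp: prod_eq_iff)
    then show ?thesis unfolding GammaE_def by simp
  qed
  have GVo: "GammaV E eta CV lam' xiV v x = GammaV E eta CV lam xiV v x" if "v \<noteq> j" for v x
  proof -
    have "lam' v = lam v" using that unfolding lam'_def by simp
    then show ?thesis unfolding GammaV_def by simp
  qed
  have D: "Lyap n d E eta CV CE lam' xiE xiV - Lyap n d E eta CV CE lam xiE xiV =
     - (\<Sum>x<d. \<Sum>y<d. GammaE eta CE lam' xiE (i,j) x y) + (\<Sum>x<d. \<Sum>y<d. GammaE eta CE lam xiE (i,j) x y)
     - (\<Sum>x<d. GammaV E eta CV lam' xiV j x) + (\<Sum>x<d. GammaV E eta CV lam xiV j x)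
     - xiE (i,j) + xiE (i,j) - xiV j + xiV j"
    by (rule Lyap_diff) (use bf ij_edge GEo GVo in auto)
  have GEij: "GammaE eta CE lam' xiE (i,j) x y = GammaE eta CE lam xiE (i,j) x y / exp (dl y)" for x y
  proof -
    have "lam' i j = lam i j" using bf by (intro lother) auto
    then have "GammaE eta CE lam' xiE (i,j) x y
        = exp ((- eta * CE (i,j) x y - lam i j x - lam j i y - xiE (i,j)) - dl y)"
      unfolding GammaE_def by (simp add: lji algebra_simps)
    then show ?thesis unfolding GammaE_def exp_diff by simp
  qed
  have GVj: "GammaV E eta CV lam' xiV j x = b x * exp (dl x)" for x
  proof -
    have "(\<Sum>k\<in>nbrs E j. lam' j k x) - (\<Sum>k\<in>nbrs E j. lam j k x) = lam' j i x - lam j i x"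
      by (rule sum_diff_one) (use bf lother in auto)
    then have "(\<Sum>k\<in>nbrs E j. lam' j k x) = (\<Sum>k\<in>nbrs E j. lam j k x) + dl x" using lji by simp
    then have "GammaV E eta CV lam' xiV j x = exp ((- eta * CV j x - xiV j + (\<Sum>k\<in>nbrs E j. lam j k x)) + dl x)"
      unfolding GammaV_def by (simp add: algebra_simps)
    then show ?thesis unfolding GammaV_def b_def exp_add by simp
  qed
  have S1: "(\<Sum>x<d. \<Sum>y<d. GammaE eta CE lam' xiE (i,j) x y) = (\<Sum>y<d. sqrt (a y) * sqrt (b y))"
  proof -
    have "(\<Sum>x<d. \<Sum>y<d. GammaE eta CE lam' xiE (i,j) x y) = (\<Sum>y<d. \<Sum>x<d. GammaE eta CE lam' xiE (i,j) x y)"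
      by (rule sum.swap)
    also have "\<dots> = (\<Sum>y<d. sqrt (a y) * sqrt (b y))"
    proof (rule sum.cong[OF refl])
      fix y
      have "(\<Sum>x<d. GammaE eta CE lam' xiE (i,j) x y) = a y / exp (dl y)"
        unfolding GEij a_def by (simp add: sum_divide_distrib)
      then show "(\<Sum>x<d. GammaE eta CE lam' xiE (i,j) x y) = sqrt (a y) * sqrt (b y)"
        using sqrt_aux1[OF apos bpos] expdl by simp
    qed
    finally show ?thesis .
  qed
  have S2: "(\<Sum>x<d. GammaV E eta CV lam' xiV j x) = (\<Sum>x<d. sqrt (a x) * sqrt (b x))"
    using GVj expdl sqrt_aux2[OF apos bpos] by simp
  have S0: "(\<Sum>x<d. \<Sum>y<d. GammaE eta CE lam xiE (i,j) x y) = (\<Sum>y<d. a y)"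
    unfolding a_def by (rule sum.swap)
  have H: "2 * (hellinger d a b)^2 = (\<Sum>x<d. a x + b x - 2 * (sqrt (a x) * sqrt (b x)))"
    unfolding hell2 using apos bpos by (intro sum.cong) (auto intro!: sq_expand less_imp_le)
  have "Lyap n d E eta CV CE lam' xiE xiV - Lyap n d E eta CV CE lam xiE xiV = 2 * (hellinger d a b)^2"
    unfolding D S1 S2 H S0 using b_def
    by (simp add: sum.distrib sum_subtractf sum_distrib_left[symmetric])
  then show ?thesis unfolding a_def b_def by (simp add: a_def[abs_def])
qed

lemma part_b:
  assumes d_pos: "0 < d"
    and E_sub: "E \<subseteq> {1..n} \<times> {1..n}"
    and E_simple: "\<forall>(a, b)\<in>E. a \<noteq> b \<and> (b, a) \<notin> E"
    and ij_edge: "(i, j) \<in> E"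
    and v: "v \<in> {1..n}"
    and xiE'_def: "xiE' = xiE((i, j) := xiE (i, j) + ln (\<Sum>x<d. \<Sum>y<d. GammaE eta CE lam xiE (i, j) x y))"
    and xiV'_def: "xiV' = xiV(v := xiV v + ln (\<Sum>x<d. GammaV E eta CV lam xiV v x))"
  shows "Lyap n d E eta CV CE lam xiE' xiV' - Lyap n d E eta CV CE lam xiE xiV \<ge> 0"
proof -
  note bf = basic_facts[OF E_sub E_simple ij_edge]
  define A where "A = (\<Sum>x<d. \<Sum>y<d. GammaE eta CE lam xiE (i, j) x y)"
  define B where "B = (\<Sum>x<d. GammaV E eta CV lam xiV v x)"
  have Apos: "A > 0" unfolding A_def by (intro sumpos[OF d_pos] sumpos[OF d_pos] GE_pos)
  have Bpos: "B > 0" unfolding B_def by (intro sumpos[OF d_pos] GV_pos)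
  have D: "Lyap n d E eta CV CE lam xiE' xiV' - Lyap n d E eta CV CE lam xiE xiV =
     - (\<Sum>x<d. \<Sum>y<d. GammaE eta CE lam xiE' (i,j) x y) + (\<Sum>x<d. \<Sum>y<d. GammaE eta CE lam xiE (i,j) x y)
     - (\<Sum>x<d. GammaV E eta CV lam xiV' v x) + (\<Sum>x<d. GammaV E eta CV lam xiV v x)
     - xiE' (i,j) + xiE (i,j) - xiV' v + xiV v"
    by (rule Lyap_diff) (use bf ij_edge v in \<open>auto simp: xiE'_def xiV'_def GammaE_def GammaV_def\<close>)
  have GE': "GammaE eta CE lam xiE' (i,j) x y = GammaE eta CE lam xiE (i,j) x y / A" for x y
  proof -
    have "GammaE eta CE lam xiE' (i,j) x y = exp ((- eta * CE (i,j) x y - lam i j x - lam j i y - xiE (i,j)) - ln A)"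
      unfolding GammaE_def xiE'_def A_def by (simp add: algebra_simps)
    then show ?thesis unfolding GammaE_def exp_diff using Apos by simp
  qed
  have GV': "GammaV E eta CV lam xiV' v x = GammaV E eta CV lam xiV v x / B" for x
  proof -
    have "GammaV E eta CV lam xiV' v x = exp ((- eta * CV v x - xiV v + (\<Sum>k\<in>nbrs E v. lam v k x)) - ln B)"
      unfolding GammaV_def xiV'_def B_def by (simp add: algebra_simps)
    then show ?thesis unfolding GammaV_def exp_diff using Bpos by simp
  qed
  have S1: "(\<Sum>x<d. \<Sum>y<d. GammaE eta CE lam xiE' (i,j) x y) = 1"
    unfolding GE' using Apos by (simp add: sum_divide_distrib[symmetric] A_def)
  have S2: "(\<Sum>x<d. GammaV E eta CV lam xiV' v x) = 1"
    unfolding GV' using Bpos by (simp add: sum_divide_distrib[symmetric] B_def)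
  have "Lyap n d E eta CV CE lam xiE' xiV' - Lyap n d E eta CV CE lam xiE xiV
     = (A - 1 - ln A) + (B - 1 - ln B)"
    unfolding D S1 S2 by (simp add: xiE'_def xiV'_def A_def B_def)
  then show ?thesis using ln_ineq[OF Apos] ln_ineq[OF Bpos] by linarith
qed

theorem lemma1:
  fixes n d :: nat and E :: "(nat \<times> nat) set" and eta :: real
    and CV :: "nat \<Rightarrow> nat \<Rightarrow> real" and CE :: "nat \<times> nat \<Rightarrow> nat \<Rightarrow> nat \<Rightarrow> real"
    and lam :: "nat \<Rightarrow> nat \<Rightarrow> nat \<Rightarrow> real" and xiE :: "nat \<times> nat \<Rightarrow> real"
    and xiV :: "nat \<Rightarrow> real" and i j :: nat
  assumes d_pos: "0 < d"
    and eta_pos: "0 < eta"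
    and E_sub: "E \<subseteq> {1..n} \<times> {1..n}"
    and E_simple: "\<forall>(a, b)\<in>E. a \<noteq> b \<and> (b, a) \<notin> E"
    and ij_edge: "(i, j) \<in> E"
  shows
   "(let lam' = lam(i := (lam i)(j := (\<lambda>x. lam i j x + 1/2 * ln
            ((\<Sum>x'<d. GammaE eta CE lam xiE (i, j) x x') / GammaV E eta CV lam xiV i x))))
     in Lyap n d E eta CV CE lam' xiE xiV - Lyap n d E eta CV CE lam xiE xiV
        = 2 * (hellinger d (\<lambda>x. \<Sum>x'<d. GammaE eta CE lam xiE (i, j) x x')
                           (GammaV E eta CV lam xiV i))^2)
  \<and> (let xiE' = xiE((i, j) := xiE (i, j) + ln (\<Sum>x<d. \<Sum>y<d. GammaE eta CE lam xiE (i, j) x y));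
         xiV' = xiV(i := xiV i + ln (\<Sum>x<d. GammaV E eta CV lam xiV i x))
     in Lyap n d E eta CV CE lam xiE' xiV' - Lyap n d E eta CV CE lam xiE xiV \<ge> 0)
  \<and> (let lam' = lam(j := (lam j)(i := (\<lambda>x. lam j i x + 1/2 * ln
            ((\<Sum>x'<d. GammaE eta CE lam xiE (i, j) x' x) / GammaV E eta CV lam xiV j x))))
     in Lyap n d E eta CV CE lam' xiE xiV - Lyap n d E eta CV CE lam xiE xiV
        = 2 * (hellinger d (\<lambda>x. \<Sum>x'<d. GammaE eta CE lam xiE (i, j) x' x)
                           (GammaV E eta CV lam xiV j))^2)
  \<and> (let xiE' = xiE((i, j) := xiE (i, j) + ln (\<Sum>x<d. \<Sum>y<d. GammaE eta CE lam xiE (i, j) x y));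
         xiV' = xiV(j := xiV j + ln (\<Sum>x<d. GammaV E eta CV lam xiV j x))
     in Lyap n d E eta CV CE lam xiE' xiV' - Lyap n d E eta CV CE lam xiE xiV \<ge> 0)"
proof -
  note bf = basic_facts[OF E_sub E_simple ij_edge]
  show ?thesis unfolding Let_def
    apply (intro conjI)
    apply (rule part_a[OF d_pos E_sub E_simple ij_edge refl])
    apply (rule part_b[OF d_pos E_sub E_simple ij_edge bf(4) refl refl])
    apply (rule part_c[OF d_pos E_sub E_simple ij_edge refl])
    apply (rule part_b[OF d_pos E_sub E_simple ij_edge bf(5) refl refl])
    done
qed

end
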